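(* Let $\mathfrak g$ be of type $A_n$. For distinct $i,j\in I$ and every $b\in\mathcal B(\infty)$, $\widetilde f_i\widetilde f_j^\ast(b)=\widetilde f_j^\ast\widetilde f_i(b)$.
   Context: $I=\{1,\dots,n\}$. $\mathcal I=\{(s,t)\in\mathbb Z_{>0}\times I:s+t\le n+1\}$; $\mathcal B(\infty)$ is the set of $b=(b_{s,t})_{(s,t)\in\mathcal I}\in\mathbb Z_{\ge0}^{\mathcal I}$ with $b_{1,k}\ge b_{2,k-1}\ge\dots\ge b_{k,1}$ for $1\le k\le n$. Convention: $b_{s,t}=0$, $\mathbf e_{s,t}=0$ for $(s,t)\notin\mathcal I$. $\partial_{s,t}(b)=b_{s,t}-b_{s,t+1}-b_{s+1,t-1}+b_{s+1,t}$, $\partial^\ast_{s,t}(b)=b_{s-1,t}-b_{s-1,t+1}-b_{s,t-1}+b_{s,t}$. For $i\in I$, $1\le k\le n+1-i$: $\Sigma_k(b)=\sum_{s=k}^{n+1-i}\partial_{s,i}(b)$, $m_i(b)$ the smallest $k$ maximizing $\Sigma_k(b)$, $\widetilde f_i(b)=b+\mathbf e_{m_i(b),i}$. For $j\in I$, $1\le k\le j$: $\Sigma^\ast_k(b)=\sum_{t=1}^k\partial^\ast_{t,j+1-t}(b)$, $m_j^\ast(b)$ the smallest $k$ maximizing $\Sigma^\ast_k(b)$, $\widetilde f_j^\ast(b)=b+\sum_{t=1}^{m_j^\ast(b)}(\mathbf e_{t,j+1-t}-\mathbf e_{t-1,j+1-t})$. *)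

theory Defs
  imports Main
begin

type_synonym arr = "nat \<times> nat \<Rightarrow> int"

definition inI :: "nat \<Rightarrow> nat \<Rightarrow> nat \<Rightarrow> bool" where
  "inI n s t \<longleftrightarrow> 1 \<le> s \<and> 1 \<le> t \<and> t \<le> n \<and> s + t \<le> n + 1"

definition Binf :: "nat \<Rightarrow> arr set" where
  "Binf n = {b. (\<forall>s t. \<not> inI n s t \<longrightarrow> b (s,t) = 0)
              \<and> (\<forall>s t. inI n s t \<longrightarrow> 0 \<le> b (s,t))
              \<and> (\<forall>k s. 1 \<le> k \<and> k \<le> n \<and> 1 \<le> s \<and> s < k \<longrightarrow> b (s+1, k-s) \<le> b (s, k+1-s))}"

definition evec :: "nat \<Rightarrow> nat \<Rightarrow> nat \<Rightarrow> arr" where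
  "evec n s t = (\<lambda>p. if inI n s t \<and> p = (s,t) then 1 else 0)"

definition pd :: "arr \<Rightarrow> nat \<Rightarrow> nat \<Rightarrow> int" where
  "pd b s t = b (s,t) - b (s,t+1) - b (s+1,t-1) + b (s+1,t)"

definition pdstar :: "arr \<Rightarrow> nat \<Rightarrow> nat \<Rightarrow> int" where
  "pdstar b s t = b (s-1,t) - b (s-1,t+1) - b (s,t-1) + b (s,t)"

definition Sig :: "nat \<Rightarrow> nat \<Rightarrow> arr \<Rightarrow> nat \<Rightarrow> int" where
  "Sig n i b k = (\<Sum>s=k..n+1-i. pd b s i)"

definition mi :: "nat \<Rightarrow> nat \<Rightarrow> arr \<Rightarrow> nat" where
  "mi n i b = (LEAST k. k \<in> {1..n+1-i} \<and> (\<forall>k'\<in>{1..n+1-i}. Sig n i b k' \<le> Sig n i b k))"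

definition ft :: "nat \<Rightarrow> nat \<Rightarrow> arr \<Rightarrow> arr" where
  "ft n i b = (\<lambda>p. b p + evec n (mi n i b) i p)"

definition Sigstar :: "nat \<Rightarrow> arr \<Rightarrow> nat \<Rightarrow> int" where
  "Sigstar j b k = (\<Sum>t=1..k. pdstar b t (j+1-t))"

definition mstar :: "nat \<Rightarrow> arr \<Rightarrow> nat" where
  "mstar j b = (LEAST k. k \<in> {1..j} \<and> (\<forall>k'\<in>{1..j}. Sigstar j b k' \<le> Sigstar j b k))"

definition ftstar :: "nat \<Rightarrow> nat \<Rightarrow> arr \<Rightarrow> arr" where
  "ftstar n j b = (\<lambda>p. b p + (\<Sum>t=1..mstar j b. evec n t (j+1-t) p - evec n (t-1) (j+1-t) p))"

end

theory Submission
  imports Defs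
begin

definition am :: "nat \<Rightarrow> (nat \<Rightarrow> int) \<Rightarrow> nat" where
  "am L f = (LEAST k. k \<in> {1..L} \<and> (\<forall>k'\<in>{1..L}. f k' \<le> f k))"

lemma am_spec:
  assumes "1 \<le> L"
  shows "am L f \<in> {1..L} \<and> (\<forall>k\<in>{1..L}. f k \<le> f (am L f)) \<and> (\<forall>k\<in>{1..L}. k < am L f \<longrightarrow> f k < f (am L f))"
proof -
  let ?P = "\<lambda>k. k \<in> {1..L} \<and> (\<forall>k'\<in>{1..L}. f k' \<le> f k)"
  have fin: "finite (f ` {1..L})" and ne: "f ` {1..L} \<noteq> {}" using assms by auto
  obtain x where x: "x \<in> {1..L}" "f x = Max (f ` {1..L})" using Max_in[OF fin ne] by auto
  have "?P x" using x fin by auto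
  hence P: "?P (am L f)" unfolding am_def by (rule LeastI)
  have "\<forall>k\<in>{1..L}. k < am L f \<longrightarrow> f k < f (am L f)"
  proof (intro ballI impI)
    fix k assume k: "k \<in> {1..L}" "k < am L f"
    show "f k < f (am L f)"
    proof (rule ccontr)
      assume "\<not> f k < f (am L f)"
      hence "?P k" using P k by force
      hence "am L f \<le> k" unfolding am_def by (rule Least_le)
      thus False using k by simp
    qed
  qed
  thus ?thesis using P by blast
qed

lemma am_eqI:
  assumes "m \<in> {1..L}" "\<forall>k\<in>{1..L}. f k \<le> f m" "\<forall>k\<in>{1..L}. k < m \<longrightarrow> f k < f m"
  shows "am L f = m"
  unfolding am_def
proof (rule Least_equality)
  show "m \<in> {1..L} \<and> (\<forall>k'\<in>{1..L}. f k' \<le> f m)" using assms by blast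
  fix y assume "y \<in> {1..L} \<and> (\<forall>k'\<in>{1..L}. f k' \<le> f y)"
  thus "m \<le> y" using assms by (meson leI not_less)
qed

lemma key:
  fixes S T S' T' :: "nat \<Rightarrow> int"
  assumes r: "1 \<le> r" "r + 1 \<le> N" "r + 1 \<le> j"
  and m: "m = am N S" and M: "M = am j T"
  and rel: "T (r+1) - T r = S r - S (r+1)"
  and S': "\<forall>k\<in>{1..N}. S' k = S k + (if M = r \<and> k = r then -1 else if M = r+1 \<and> k = r+1 then 1 else 0)"
  and T': "\<forall>k\<in>{1..j}. T' k = T k + (if m = r+1 \<and> k = m then 1 else if m = r \<and> k = m then -1 else 0)"
  shows "(am N S' = m \<and> am j T' = M) \<or> (m = r \<and> M = r \<and> am N S' = r+1 \<and> am j T' = r+1)"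
proof -
  have sm: "m \<in> {1..N}" "\<forall>k\<in>{1..N}. S k \<le> S m" "\<forall>k\<in>{1..N}. k < m \<longrightarrow> S k < S m"
    using am_spec[of N S] r m by auto
  have sM: "M \<in> {1..j}" "\<forall>k\<in>{1..j}. T k \<le> T M" "\<forall>k\<in>{1..j}. k < M \<longrightarrow> T k < T M"
    using am_spec[of j T] r M by auto
  have rN: "r \<in> {1..N}" "r+1 \<in> {1..N}" "r \<in> {1..j}" "r+1 \<in> {1..j}" using r by auto
  have Sr: "S r \<le> S m" "r < m \<longrightarrow> S r < S m" "S (r+1) \<le> S m" "r+1 < m \<longrightarrow> S (r+1) < S m"
    using sm rN by auto
  have Tr: "T r \<le> T M" "r < M \<longrightarrow> T r < T M" "T (r+1) \<le> T M" "r+1 < M \<longrightarrow> T (r+1) < T M"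
    using sM rN by auto
  have S'r: "S' r = S r + (if M = r then -1 else 0)" "S' (r+1) = S (r+1) + (if M = r+1 then 1 else 0)"
    using S' rN by auto
  have T'r: "T' r = T r + (if m = r then -1 else 0)" "T' (r+1) = T (r+1) + (if m = r+1 then 1 else 0)"
    using T' rN by auto
  have S'm: "S' m = S m + (if M = r \<and> m = r then -1 else if M = r+1 \<and> m = r+1 then 1 else 0)"
    using S' sm by auto
  have T'M: "T' M = T M + (if m = r+1 \<and> M = m then 1 else if m = r \<and> M = m then -1 else 0)"
    using T' sM by auto
  show ?thesis
  proof (cases "m = r \<and> M = r")
    case True
    have "S (r+1) \<le> S r" "T (r+1) \<le> T r" using Sr Tr True by auto
    hence e1: "S (r+1) = S r" using rel by linarith
    have e2: "T (r+1) = T r" using e1 rel by simp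
    have "am N S' = r+1"
    proof (rule am_eqI[OF rN(2)])
      show "\<forall>k\<in>{1..N}. S' k \<le> S' (r+1)"
      proof
        fix k assume k: "k \<in> {1..N}"
        have "S' k = S k + (if M = r \<and> k = r then -1 else if M = r+1 \<and> k = r+1 then 1 else 0)" using S' k by blast
        thus "S' k \<le> S' (r+1)" using sm(2) k True e1 S'r by auto
      qed
      show "\<forall>k\<in>{1..N}. k < r+1 \<longrightarrow> S' k < S' (r+1)"
      proof (intro ballI impI)
        fix k assume k: "k \<in> {1..N}" "k < r+1"
        have "S' k = S k + (if M = r \<and> k = r then -1 else if M = r+1 \<and> k = r+1 then 1 else 0)" using S' k by blast
        thus "S' k < S' (r+1)" using sm(3) k True e1 S'r by (cases "k = r") auto
      qed
    qed
    moreover have "am j T' = r+1"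
    proof (rule am_eqI[OF rN(4)])
      show "\<forall>k\<in>{1..j}. T' k \<le> T' (r+1)"
      proof
        fix k assume k: "k \<in> {1..j}"
        have "T' k = T k + (if m = r+1 \<and> k = m then 1 else if m = r \<and> k = m then -1 else 0)" using T' k by blast
        thus "T' k \<le> T' (r+1)" using sM(2) k True e2 T'r by auto
      qed
      show "\<forall>k\<in>{1..j}. k < r+1 \<longrightarrow> T' k < T' (r+1)"
      proof (intro ballI impI)
        fix k assume k: "k \<in> {1..j}" "k < r+1"
        have "T' k = T k + (if m = r+1 \<and> k = m then 1 else if m = r \<and> k = m then -1 else 0)" using T' k by blast
        thus "T' k < T' (r+1)" using sM(3) k True e2 T'r by (cases "k = r") auto
      qed
    qed
    ultimately show ?thesis using True by simp
  next
    case False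
    have "am N S' = m"
    proof (rule am_eqI[OF sm(1)])
      show "\<forall>k\<in>{1..N}. S' k \<le> S' m"
      proof
        fix k assume k: "k \<in> {1..N}"
        have "S' k = S k + (if M = r \<and> k = r then -1 else if M = r+1 \<and> k = r+1 then 1 else 0)" using S' k by blast
        moreover have "S k \<le> S m" "k < m \<longrightarrow> S k < S m" using sm k by auto
        moreover have "M = r+1 \<Longrightarrow> T r < T (r+1)" using Tr by auto
        ultimately show "S' k \<le> S' m" using False Sr S'm rel r by (cases "M = r+1 \<and> k = r+1"; cases "m = r+1"; auto)
      qed
      show "\<forall>k\<in>{1..N}. k < m \<longrightarrow> S' k < S' m"
      proof (intro ballI impI)
        fix k assume k: "k \<in> {1..N}" "k < m"
        have "S' k = S k + (if M = r \<and> k = r then -1 else if M = r+1 \<and> k = r+1 then 1 else 0)" using S' k by blast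
        moreover have "S k < S m" using sm k by auto
        moreover have "M = r+1 \<Longrightarrow> T r < T (r+1)" using Tr by auto
        ultimately show "S' k < S' m" using k False Sr S'm rel r by (cases "M = r+1 \<and> k = r+1"; cases "m = r+1"; auto)
      qed
    qed
    moreover have "am j T' = M"
    proof (rule am_eqI[OF sM(1)])
      show "\<forall>k\<in>{1..j}. T' k \<le> T' M"
      proof
        fix k assume k: "k \<in> {1..j}"
        have "T' k = T k + (if m = r+1 \<and> k = m then 1 else if m = r \<and> k = m then -1 else 0)" using T' k by blast
        moreover have "T k \<le> T M" "k < M \<longrightarrow> T k < T M" using sM k by auto
        moreover have "m = r+1 \<Longrightarrow> S r < S (r+1)" using Sr sm rN by auto
        ultimately have A: "T' k \<le> T k + (if m = r+1 \<and> k = r+1 then 1 else 0)" "T k \<le> T M" "k < M \<longrightarrow> T k < T M"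
          "m = r+1 \<Longrightarrow> S r < S (r+1)" by auto
        have B: "T M \<le> T' M" using T'M False by auto
        show "T' k \<le> T' M"
        proof (cases "m = r+1 \<and> k = r+1")
          case True
          have "T (r+1) < T M"
          proof (cases "r+1 < M")
            case True then show ?thesis using Tr by auto
          next
            case False then show ?thesis
              using Tr A(4) True rel \<open>m = r+1 \<and> k = r+1\<close> sM(1) by (cases "M = r+1") auto
          qed
          then show ?thesis using A B True by auto
        next
          case False then show ?thesis using A B by auto
        qed
      qed
      show "\<forall>k\<in>{1..j}. k < M \<longrightarrow> T' k < T' M"
      proof (intro ballI impI)
        fix k assume k: "k \<in> {1..j}" "k < M"
        have "T' k = T k + (if m = r+1 \<and> k = m then 1 else if m = r \<and> k = m then -1 else 0)" using T' k by blast
        moreover have "T k < T M" using sM k by auto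
        moreover have "m = r+1 \<Longrightarrow> S r < S (r+1)" using Sr sm rN by auto
        ultimately have A: "T' k \<le> T k + (if m = r+1 \<and> k = r+1 then 1 else 0)" "T k < T M"
          by auto
        have B: "T M \<le> T' M" using T'M False by auto
        show "T' k < T' M"
        proof (cases "m = r+1 \<and> k = r+1")
          case True
          have "S r < S (r+1)" using Sr sm rN True by auto
          hence "T (r+1) + 1 < T M" using Tr True k rel by auto
          then show ?thesis using A B True by auto
        next
          case False then show ?thesis using A B by auto
        qed
      qed
    qed
    ultimately show ?thesis by simp
  qed
qed


lemma am_cong: "(\<forall>k\<in>{1..L}. f k = g k) \<Longrightarrow> am L f = am L g"
  unfolding am_def by (metis atLeastAtMost_iff)

lemma mi_am: "mi n i b = am (n+1-i) (Sig n i b)" by (simp add: mi_def am_def)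
lemma mstar_am: "mstar j b = am j (Sigstar j b)" by (simp add: mstar_def am_def)

lemma Sig_add: "Sig n i (\<lambda>p. b p + d p) k = Sig n i b k + Sig n i d k"
  unfolding Sig_def pd_def by (simp add: sum.distrib[symmetric] algebra_simps)

lemma Sigstar_add: "Sigstar j (\<lambda>p. b p + d p) k = Sigstar j b k + Sigstar j d k"
  unfolding Sigstar_def pdstar_def by (simp add: sum.distrib[symmetric] algebra_simps)

definition Dl :: "nat \<Rightarrow> nat \<Rightarrow> nat \<Rightarrow> arr" where
  "Dl n j M p = (\<Sum>t=1..M. evec n t (j+1-t) p - evec n (t-1) (j+1-t) p)"

lemma ftstar_eq: "ftstar n j b = (\<lambda>p. b p + Dl n j (mstar j b) p)"
  unfolding ftstar_def Dl_def by simp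

lemma evec_simp: "inI n m i \<Longrightarrow> evec n m i p = (if p = (m,i) then 1 else 0)"
  unfolding evec_def by auto

lemma Dl_closed:
  assumes "1 \<le> j" "j \<le> n" "M \<le> j"
  shows "Dl n j M (a,c) = (if a + c = j+1 \<and> 1 \<le> a \<and> a \<le> M then 1 else 0)
                         - (if a + c = j \<and> 1 \<le> a \<and> a < M then 1 else 0)"
proof -
  have 1: "(\<Sum>t=1..M. evec n t (j+1-t) (a,c)) = (\<Sum>t\<in>{1..M}. if t = a then (if a + c = j+1 then 1 else 0) else 0)"
    by (rule sum.cong) (use assms in \<open>auto simp: evec_def inI_def\<close>)
  have 2: "(\<Sum>t=1..M. evec n (t-1) (j+1-t) (a,c)) = (\<Sum>t\<in>{1..M}. if t = a+1 then (if a + c = j \<and> 1 \<le> a then 1 else 0) else 0)"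
    by (rule sum.cong) (use assms in \<open>auto simp: evec_def inI_def\<close>)
  show ?thesis unfolding Dl_def sum_subtractf 1 2 by (simp add: sum.delta)
qed

lemma tele_up:
  fixes F h :: "nat \<Rightarrow> int"
  shows "(\<forall>t\<in>{1..k}. F t = h t - h (t-1)) \<Longrightarrow> (\<Sum>t=1..k. F t) = h k - h 0"
  by (induction k) (auto simp: sum.cl_ivl_Suc)

lemma tele_down:
  fixes F g :: "nat \<Rightarrow> int"
  assumes "k \<le> Suc N" "\<forall>s\<in>{k..N}. F s = g s - g (Suc s)"
  shows "(\<Sum>s=k..N. F s) = g k - g (Suc N)"
proof -
  have "(\<Sum>s=k..N. F s) = - (\<Sum>s=k..N. g (Suc s) - g s)"
    using assms(2) by (simp add: sum_negf[symmetric])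
  also have "\<dots> = g k - g (Suc N)" using sum_Suc_diff[OF assms(1), of g] by simp
  finally show ?thesis .
qed

definition gD :: "nat \<Rightarrow> nat \<Rightarrow> nat \<Rightarrow> nat \<Rightarrow> int" where
  "gD i j M k = (if i < j \<and> M = j-i \<and> k = j-i then -1 else if i < j \<and> M = j-i+1 \<and> k = j-i+1 then 1 else 0)"

lemma pd_Dl:
  assumes "1 \<le> i" "i \<le> n" "1 \<le> j" "j \<le> n" "M \<le> j" "1 \<le> s" "i \<noteq> j"
  shows "pd (Dl n j M) s i = gD i j M s - gD i j M (Suc s)"
  unfolding pd_def gD_def using assms by (simp add: Dl_closed) presburger


lemma Sig_Dl:
  assumes "1 \<le> i" "i \<le> n" "1 \<le> j" "j \<le> n" "M \<le> j" "1 \<le> k" "i \<noteq> j"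
  shows "Sig n i (Dl n j M) k = gD i j M k"
proof (cases "k \<le> Suc (n+1-i)")
  case True
  have "Sig n i (Dl n j M) k = gD i j M k - gD i j M (Suc (n+1-i))"
    unfolding Sig_def
    by (rule tele_down[OF True]) (use assms pd_Dl in auto)
  moreover have "gD i j M (Suc (n+1-i)) = 0" using assms unfolding gD_def by auto
  ultimately show ?thesis by simp
next
  case False
  thus ?thesis using assms unfolding Sig_def gD_def by auto
qed

definition hE :: "nat \<Rightarrow> nat \<Rightarrow> nat \<Rightarrow> nat \<Rightarrow> int" where
  "hE j m i k = (if m + i = j+1 \<and> k = m then 1 else if m + i = j \<and> k = m then -1 else 0)"

lemma pdstar_e:
  assumes "1 \<le> i" "i \<le> n" "1 \<le> m" "m + i \<le> n+1" "1 \<le> t" "t \<le> j"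
  shows "pdstar (evec n m i) t (j+1-t) = hE j m i t - hE j m i (t-1)"
proof -
  have "inI n m i" using assms unfolding inI_def by auto
  show ?thesis
  proof (cases "t = m")
    case True
    thus ?thesis unfolding pdstar_def hE_def using assms \<open>inI n m i\<close> by (auto simp: evec_simp)
  next
    case False
    show ?thesis
    proof (cases "t = Suc m")
      case True
      thus ?thesis unfolding pdstar_def hE_def using assms \<open>inI n m i\<close> by (auto simp: evec_simp)
    next
      case False
      thus ?thesis unfolding pdstar_def hE_def using assms \<open>inI n m i\<close> \<open>t \<noteq> m\<close> by (auto simp: evec_simp)
    qed
  qed
qed

lemma Sigstar_e:
  assumes "1 \<le> i" "i \<le> n" "1 \<le> m" "m + i \<le> n+1" "k \<le> j"
  shows "Sigstar j (evec n m i) k = hE j m i k"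
proof -
  have "Sigstar j (evec n m i) k = hE j m i k - hE j m i 0"
    unfolding Sigstar_def by (rule tele_up) (use assms pdstar_e in auto)
  moreover have "hE j m i 0 = 0" using assms unfolding hE_def by auto
  ultimately show ?thesis by simp
qed

lemma rel_ST:
  assumes "1 \<le> i" "i < j" "j \<le> n"
  shows "Sigstar j b (j-i+1) - Sigstar j b (j-i) = Sig n i b (j-i) - Sig n i b (j-i+1)"
proof -
  have "Sigstar j b (Suc (j-i)) = Sigstar j b (j-i) + pdstar b (Suc (j-i)) (j+1 - Suc (j-i))"
    unfolding Sigstar_def by (simp add: sum.cl_ivl_Suc)
  moreover have "Sig n i b (j-i) = pd b (j-i) i + Sig n i b (Suc (j-i))"
    unfolding Sig_def using assms by (subst sum.atLeast_Suc_atMost) auto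
  moreover have "pdstar b (Suc (j-i)) (j+1 - Suc (j-i)) = pd b (j-i) i"
    unfolding pdstar_def pd_def using assms by (simp add: Suc_diff_le)
  ultimately show ?thesis by simp
qed


theorem proposition6p11:
  fixes n i j :: nat and b :: arr
  assumes "i \<in> {1..n}" and "j \<in> {1..n}" and "i \<noteq> j" and "b \<in> Binf n"
  shows "ft n i (ftstar n j b) = ftstar n j (ft n i b)"
proof -
  have i: "1 \<le> i" "i \<le> n" and j: "1 \<le> j" "j \<le> n" using assms by auto
  define N where "N = n+1-i"
  define S where "S = Sig n i b"
  define T where "T = Sigstar j b"
  define m where "m = mi n i b"
  define M where "M = mstar j b"
  define S' where "S' = Sig n i (ftstar n j b)"
  define T' where "T' = Sigstar j (ft n i b)"
  have mam: "m = am N S" unfolding m_def N_def S_def by (rule mi_am)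
  have Mam: "M = am j T" unfolding M_def T_def by (rule mstar_am)
  have N1: "1 \<le> N" using i unfolding N_def by auto
  have mr: "m \<in> {1..N}" using am_spec[OF N1, of S] mam by auto
  have Mr: "M \<in> {1..j}" using am_spec[OF j(1), of T] Mam by auto
  have ftb: "ft n i b = (\<lambda>p. b p + evec n m i p)" unfolding ft_def m_def ..
  have fsb: "ftstar n j b = (\<lambda>p. b p + Dl n j M p)" unfolding M_def by (rule ftstar_eq)
  have S'eq: "\<forall>k\<in>{1..N}. S' k = S k + gD i j M k"
    unfolding S'_def S_def fsb Sig_add using Sig_Dl[OF i j _ _ assms(3)] Mr by auto
  have T'eq: "\<forall>k\<in>{1..j}. T' k = T k + hE j m i k"
    unfolding T'_def T_def ftb Sigstar_add using Sigstar_e[OF i] mr unfolding N_def by auto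
  have m'am: "mi n i (ftstar n j b) = am N S'" unfolding S'_def N_def by (rule mi_am)
  have M'am: "mstar j (ft n i b) = am j T'" unfolding T'_def by (rule mstar_am)
  have L: "ft n i (ftstar n j b) = (\<lambda>p. b p + Dl n j M p + evec n (am N S') i p)"
    unfolding ft_def m'am[symmetric] fsb ..
  have R: "ftstar n j (ft n i b) = (\<lambda>p. b p + evec n m i p + Dl n j (am j T') p)"
    using ftstar_eq[of n j "ft n i b"] unfolding M'am by (simp add: ftb)
  show ?thesis
  proof (cases "i < j")
    case False
    hence ij: "j < i" using assms(3) by auto
    have "am N S' = am N S"
      by (rule am_cong) (use S'eq ij in \<open>auto simp: gD_def\<close>)
    moreover have "am j T' = am j T"
      by (rule am_cong) (use T'eq ij mr in \<open>auto simp: hE_def\<close>)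
    ultimately show ?thesis unfolding L R mam[symmetric] Mam[symmetric] by (auto simp: algebra_simps)
  next
    case True
    define r where "r = j - i"
    have r: "1 \<le> r" "r + 1 \<le> N" "r + 1 \<le> j" using True i j unfolding r_def N_def by auto
    have rel: "T (r+1) - T r = S r - S (r+1)"
      unfolding T_def S_def r_def by (rule rel_ST) (use True i j in auto)
    have S'2: "\<forall>k\<in>{1..N}. S' k = S k + (if M = r \<and> k = r then -1 else if M = r+1 \<and> k = r+1 then 1 else 0)"
      using S'eq True unfolding gD_def r_def by auto
    have T'2: "\<forall>k\<in>{1..j}. T' k = T k + (if m = r+1 \<and> k = m then 1 else if m = r \<and> k = m then -1 else 0)"
      using T'eq True unfolding hE_def r_def by auto
    from key[OF r mam Mam rel S'2 T'2]
    show ?thesis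
    proof
      assume "am N S' = m \<and> am j T' = M"
      thus ?thesis unfolding L R by (auto simp: algebra_simps)
    next
      assume A: "m = r \<and> M = r \<and> am N S' = r+1 \<and> am j T' = r+1"
      have in1: "inI n r i" "inI n (r+1) i" using r i j True unfolding inI_def r_def N_def by auto
      show ?thesis unfolding L R A[THEN conjunct2, THEN conjunct2, THEN conjunct1]
        A[THEN conjunct2, THEN conjunct2, THEN conjunct2]
      proof
        fix p :: "nat \<times> nat"
        obtain a c where p: "p = (a,c)" by force
        have "r \<le> j" "r + 1 \<le> j" using r by auto
        thus "b p + Dl n j M p + evec n (r + 1) i p = b p + evec n m i p + Dl n j (r + 1) p"
          unfolding p using A in1 j Dl_closed[OF j] True unfolding r_def
          by (simp add: evec_simp) linarith
      qed
    qed
  qed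
qed

end
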